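(* Let $(L,d)$ be a metric locale without isolated points. Then the Booleanization $B_L=\{a\in L\mid a=a^{**}\}$ of $L$ coincides with the DeMorganization $M_L$ of $L$, i.e. $B_L=M_L$.
   Context: A frame (locale) $L$ is a complete lattice in which finite meets distribute over arbitrary joins; $a\to b$ denotes the Heyting implication (right adjoint to $a\wedge -$) and $a^*=a\to 0$ the pseudocomplement. A sublocale of $L$ is a subset $S\subseteq L$ closed under arbitrary meets (in particular $1\in S$) such that $a\to s\in S$ for all $a\in L$, $s\in S$; a sublocale is itself a frame under the inherited order. A sublocale $S$ is dense if $\bigwedge S=0$. A locale is extremally disconnected if $a^*\vee a^{**}=1$ for all $a$. For $a\in L$ the open sublocale is $\mathfrak{o}(a)=\{a\to b\mid b\in L\}$. The DeMorganization $M_L$ of $L$ is the largest dense extremally disconnected sublocale of $L$; explicitly $M_L=\bigcap_{a\in L}\mathfrak{o}(a^*\vee a^{**})$. A diameter on $L$ is a map $d\colon L\to[0,+\infty]$ with (D1) $d(0)=0$; (D2) $a\le b\Rightarrow d(a)\le d(b)$; (D3) $a\wedge b\neq 0\Rightarrow d(a\vee b)\le d(a)+d(b)$; (D4) for every $\varepsilon>0$, $\bigvee\{a\in L\mid d(a)<\varepsilon\}=1$. Write $b\lhd_\varepsilon a$ if for every $c\in L$ with $d(c)<\varepsilon$, $c\wedge b\ne0$ implies $c\le a$. The diameter is admissible if $a=\bigvee\{b\in L\mid b\lhd_\varepsilon a \text{ for some }\varepsilon>0\}$ for all $a\in L$; a metric locale is a pair $(L,d)$ with $d$ an admissible diameter.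 A point of $L$ is $p\ne1$ such that $a\wedge b\le p$ implies $a\le p$ or $b\le p$; it is isolated if the sublocale $\{1,p\}$ is an open sublocale $\mathfrak{o}(a)$ for some $a$. *)

theory Defs
  imports Main "HOL-Library.Extended_Nonnegative_Real"
begin

text \<open>Frames (locales) are modelled as a type of class complete_lattice satisfying
  the frame distributive law (finite meets distribute over arbitrary joins).\<close>

definition frame :: "'a::complete_lattice itself \<Rightarrow> bool" where
  "frame _ \<longleftrightarrow> (\<forall>(a::'a) S. inf a (Sup S) = Sup ((\<lambda>s. inf a s) ` S))"

definition himp :: "'a::complete_lattice \<Rightarrow> 'a \<Rightarrow> 'a" where
  "himp a b = Sup {c. inf c a \<le> b}"

definition pcompl :: "'a::complete_lattice \<Rightarrow> 'a" where
  "pcompl a = himp a bot"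

definition open_sublocale :: "'a::complete_lattice \<Rightarrow> 'a set" where
  "open_sublocale a = {himp a b | b. True}"

definition booleanization :: "'a::complete_lattice set" where
  "booleanization = {a. a = pcompl (pcompl a)}"

definition demorganization :: "'a::complete_lattice set" where
  "demorganization = (\<Inter>a. open_sublocale (sup (pcompl a) (pcompl (pcompl a))))"

definition diameter :: "('a::complete_lattice \<Rightarrow> ennreal) \<Rightarrow> bool" where
  "diameter d \<longleftrightarrow>
     d bot = 0 \<and>
     (\<forall>a b. a \<le> b \<longrightarrow> d a \<le> d b) \<and>
     (\<forall>a b. inf a b \<noteq> bot \<longrightarrow> d (sup a b) \<le> d a + d b) \<and>
     (\<forall>\<epsilon>::real. \<epsilon> > 0 \<longrightarrow> Sup {a. d a < ennreal \<epsilon>} = top)"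

definition wbelow :: "('a::complete_lattice \<Rightarrow> ennreal) \<Rightarrow> real \<Rightarrow> 'a \<Rightarrow> 'a \<Rightarrow> bool" where
  "wbelow d \<epsilon> b a \<longleftrightarrow> (\<forall>c. d c < ennreal \<epsilon> \<longrightarrow> inf c b \<noteq> bot \<longrightarrow> c \<le> a)"

definition admissible :: "('a::complete_lattice \<Rightarrow> ennreal) \<Rightarrow> bool" where
  "admissible d \<longleftrightarrow> (\<forall>a. a = Sup {b. \<exists>\<epsilon>::real. \<epsilon> > 0 \<and> wbelow d \<epsilon> b a})"

definition metric_locale :: "('a::complete_lattice \<Rightarrow> ennreal) \<Rightarrow> bool" where
  "metric_locale d \<longleftrightarrow> frame TYPE('a) \<and> diameter d \<and> admissible d"

definition is_point :: "'a::complete_lattice \<Rightarrow> bool" where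
  "is_point p \<longleftrightarrow> p \<noteq> top \<and> (\<forall>a b. inf a b \<le> p \<longrightarrow> a \<le> p \<or> b \<le> p)"

definition isolated_point :: "'a::complete_lattice \<Rightarrow> bool" where
  "isolated_point p \<longleftrightarrow> is_point p \<and> (\<exists>a. {top, p} = open_sublocale a)"

end

theory Submission
  imports Defs
begin

lemma le_ext: "(\<And>z. z \<le> (x::'a::order) \<longleftrightarrow> z \<le> y) \<Longrightarrow> x = y"
  by (metis order.antisym order.refl)

lemma fdist: "frame TYPE('a::complete_lattice) \<Longrightarrow> inf (a::'a) (Sup S) = Sup ((\<lambda>s. inf a s) ` S)"
  by (simp add: frame_def)

lemma fdist2:
  assumes F: "frame TYPE('a::complete_lattice)"
  shows "inf (a::'a) (sup b c) = sup (inf a b) (inf a c)"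
proof -
  have "inf a (sup b c) = inf a (Sup {b, c})" by simp
  also have "\<dots> = Sup ((\<lambda>s. inf a s) ` {b,c})" using fdist[OF F] by blast
  finally show ?thesis by simp
qed

lemma himp_iff:
  assumes F: "frame TYPE('a::complete_lattice)"
  shows "(c::'a) \<le> himp a b \<longleftrightarrow> inf c a \<le> b"
proof
  assume "inf c a \<le> b" then show "c \<le> himp a b" unfolding himp_def by (auto intro: Sup_upper)
next
  assume h: "c \<le> himp a b"
  have "inf c a \<le> inf a (himp a b)" using h by (simp add: inf.coboundedI2 le_infI1 inf_commute)
  also have "\<dots> = Sup ((\<lambda>s. inf a s) ` {c. inf c a \<le> b})" unfolding himp_def using fdist[OF F] by blast
  also have "\<dots> \<le> b" by (auto intro!: SUP_least simp: inf_commute)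
  finally show "inf c a \<le> b" .
qed

lemma pc_iff:
  assumes F: "frame TYPE('a::complete_lattice)"
  shows "(c::'a) \<le> pcompl a \<longleftrightarrow> inf c a = bot"
  unfolding pcompl_def using himp_iff[OF F] by (simp add: bot_unique)

lemma pc_inf:
  assumes F: "frame TYPE('a::complete_lattice)"
  shows "inf (a::'a) (pcompl a) = bot"
  using pc_iff[OF F, of "pcompl a" a] by (simp add: inf_commute)

lemma pc_anti:
  assumes F: "frame TYPE('a::complete_lattice)" and "(a::'a) \<le> b"
  shows "pcompl b \<le> pcompl a"
proof -
  have "inf (pcompl b) a \<le> inf (pcompl b) b" using assms(2) by (simp add: le_infI2)
  also have "\<dots> = bot" using pc_inf[OF F, of b] by (simp add: inf_commute)
  finally show ?thesis using pc_iff[OF F] bot_unique by blast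
qed

lemma le_pcc:
  assumes F: "frame TYPE('a::complete_lattice)"
  shows "(a::'a) \<le> pcompl (pcompl a)"
  using pc_iff[OF F] pc_inf[OF F] by blast

lemma pc3:
  assumes F: "frame TYPE('a::complete_lattice)"
  shows "pcompl (pcompl (pcompl (a::'a))) = pcompl a"
  by (meson F le_pcc order.antisym pc_anti)

lemma himp_himp:
  assumes F: "frame TYPE('a::complete_lattice)"
  shows "himp (c::'a) (himp c b) = himp c b"
  by (rule le_ext) (simp add: himp_iff[OF F] inf_assoc)

lemma wbelow_anti: "wbelow d e b a \<Longrightarrow> b' \<le> b \<Longrightarrow> wbelow d e b' a"
  unfolding wbelow_def by (metis bot_unique inf_mono order_refl)

lemma D4: "diameter d \<Longrightarrow> (e::real) > 0 \<Longrightarrow> Sup {a. d a < ennreal e} = top"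
  unfolding diameter_def by blast

lemma Dmono: "diameter d \<Longrightarrow> a \<le> b \<Longrightarrow> d a \<le> d b"
  unfolding diameter_def by blast

lemma split_small:
  assumes F: "frame TYPE('a::complete_lattice)" and D: "diameter d" and e: "(e::real) > 0"
  shows "(b::'a) = Sup ((\<lambda>c. inf b c) ` {c. d c < ennreal e})"
proof -
  have "b = inf b top" by simp
  also have "\<dots> = inf b (Sup {c. d c < ennreal e})" using D4[OF D e] by simp
  also have "\<dots> = Sup ((\<lambda>c. inf b c) ` {c. d c < ennreal e})" using fdist[OF F] by blast
  finally show ?thesis .
qed

lemma wbelow_le:
  assumes F: "frame TYPE('a::complete_lattice)" and D: "diameter d" and e: "(e::real) > 0"
    and w: "wbelow d e (b::'a) a"
  shows "b \<le> a"
proof -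
  have "Sup ((\<lambda>c. inf b c) ` {c. d c < ennreal e}) \<le> a"
  proof (rule SUP_least)
    fix c assume c: "c \<in> {c. d c < ennreal e}"
    show "inf b c \<le> a"
    proof (cases "inf b c = bot")
      case False
      then have "c \<le> a" using w c unfolding wbelow_def by (simp add: inf_commute)
      then show ?thesis by (simp add: le_infI2)
    qed simp
  qed
  then show ?thesis using split_small[OF F D e, of b] by simp
qed

lemma wbelow_reg:
  assumes F: "frame TYPE('a::complete_lattice)" and D: "diameter d" and e: "(e::real) > 0"
    and w: "wbelow d e (g::'a) f"
  shows "sup (pcompl g) f = top"
proof -
  have "Sup {c. d c < ennreal e} \<le> sup (pcompl g) f"
  proof (rule Sup_least)
    fix c assume c: "c \<in> {c. d c < ennreal e}"
    show "c \<le> sup (pcompl g) f"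
    proof (cases "inf c g = bot")
      case True then show ?thesis using pc_iff[OF F] by (simp add: le_supI1)
    next
      case False then have "c \<le> f" using w c unfolding wbelow_def by simp
      then show ?thesis by (simp add: le_supI2)
    qed
  qed
  then show ?thesis using D4[OF D e] by (simp add: top_unique)
qed

lemma adm: "admissible d \<Longrightarrow> a = Sup {b. \<exists>\<epsilon>::real. \<epsilon> > 0 \<and> wbelow d \<epsilon> b a}"
  unfolding admissible_def by blast

lemma Sup_nonbot: "Sup S \<noteq> (bot::'a::complete_lattice) \<Longrightarrow> \<exists>s\<in>S. s \<noteq> bot"
  by (metis Sup_bot_conv(1))

lemma split_elem:
  fixes d :: "'a::complete_lattice \<Rightarrow> ennreal"
  assumes F: "frame TYPE('a::complete_lattice)" and D: "diameter d" and Ad: "admissible d"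
    and noiso: "\<forall>p::'a. \<not> isolated_point p" and c: "(c::'a) \<noteq> bot"
  shows "\<exists>f. f \<noteq> bot \<and> f \<le> c \<and> inf c (pcompl f) \<noteq> bot"
proof (rule ccontr)
  assume "\<not> ?thesis"
  then have H: "\<And>f. f \<noteq> bot \<Longrightarrow> f \<le> c \<Longrightarrow> inf c (pcompl f) = bot" by blast
  have atom: "f = bot \<or> f = c" if fc: "f \<le> c" for f
  proof (cases "f = bot")
    case False
    then have "Sup {b. \<exists>\<epsilon>::real. \<epsilon> > 0 \<and> wbelow d \<epsilon> b f} \<noteq> bot" using adm[OF Ad, of f] by simp
    then obtain g where g: "g \<noteq> bot" "\<exists>\<epsilon>::real. \<epsilon> > 0 \<and> wbelow d \<epsilon> g f"
      using Sup_nonbot by blast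
    then obtain \<epsilon>::real where \<epsilon>: "\<epsilon> > 0" "wbelow d \<epsilon> g f" by blast
    have gf: "g \<le> f" using wbelow_le[OF F D \<epsilon>] .
    have reg: "sup (pcompl g) f = top" using wbelow_reg[OF F D \<epsilon>] .
    have cg: "inf c (pcompl g) = bot" using H g(1) gf fc by auto
    have "c = inf c (sup (pcompl g) f)" using reg by simp
    also have "\<dots> = sup (inf c (pcompl g)) (inf c f)" using fdist2[OF F] by blast
    also have "\<dots> = f" using cg fc by (simp add: inf_absorb2)
    finally show ?thesis by simp
  qed simp
  have pt: "is_point (pcompl c)"
    unfolding is_point_def
  proof (intro conjI allI impI)
    show "pcompl c \<noteq> top"
    proof
      assume "pcompl c = top"
      then have "inf c (pcompl c) = c" by simp
      then show False using pc_inf[OF F, of c] c by simp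
    qed
  next
    fix a b assume ab: "inf a b \<le> pcompl c"
    show "a \<le> pcompl c \<or> b \<le> pcompl c"
    proof (rule ccontr)
      assume "\<not> ?thesis"
      then have "inf a c \<noteq> bot" "inf b c \<noteq> bot" using pc_iff[OF F] by auto
      then have "inf a c = c" "inf b c = c" using atom[of "inf a c"] atom[of "inf b c"] by auto
      then have "inf (inf a b) c = c" by (metis inf_assoc inf_commute)
      moreover have "inf (inf a b) c = bot" using ab pc_iff[OF F] by blast
      ultimately show False using c by simp
    qed
  qed
  have "{top, pcompl c} = open_sublocale c"
  proof
    show "{top, pcompl c} \<subseteq> open_sublocale c"
    proof -
      have "himp c c = top" by (rule le_ext) (simp add: himp_iff[OF F])
      then have "top \<in> open_sublocale c" unfolding open_sublocale_def by (metis (mono_tags, lifting) mem_Collect_eq)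
      moreover have "pcompl c \<in> open_sublocale c" unfolding open_sublocale_def pcompl_def by blast
      ultimately show ?thesis by simp
    qed
  next
    show "open_sublocale c \<subseteq> {top, pcompl c}"
    proof
      fix y assume "y \<in> open_sublocale c"
      then obtain b where y: "y = himp c b" unfolding open_sublocale_def by blast
      have "inf c b = bot \<or> inf c b = c" using atom[of "inf c b"] by simp
      then show "y \<in> {top, pcompl c}"
      proof
        assume cb: "inf c b = bot"
        have "y = pcompl c" unfolding y
        proof (rule le_ext)
          fix z
          have "z \<le> himp c b \<longleftrightarrow> inf z c \<le> b" using himp_iff[OF F] by blast
          also have "\<dots> \<longleftrightarrow> inf z c \<le> inf c b" by (metis inf.absorb_iff2 inf.cobounded2 le_inf_iff)
          also have "\<dots> \<longleftrightarrow> z \<le> pcompl c" using cb pc_iff[OF F] by (simp add: bot_unique)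
          finally show "z \<le> himp c b \<longleftrightarrow> z \<le> pcompl c" .
        qed
        then show ?thesis by simp
      next
        assume "inf c b = c"
        then have "c \<le> b" by (metis inf.orderI inf_commute)
        then have "y = top" unfolding y by (metis himp_iff[OF F] inf.coboundedI2 top_unique)
        then show ?thesis by simp
      qed
    qed
  qed
  then have "isolated_point (pcompl c)" using pt unfolding isolated_point_def by blast
  then show False using noiso by blast
qed


definition whit :: "('a::complete_lattice \<Rightarrow> ennreal) \<Rightarrow> 'a \<Rightarrow> 'a \<Rightarrow> bool" where
  "whit d x c \<longleftrightarrow> (\<exists>\<delta>::real. \<delta> > 0 \<and> d c < ennreal \<delta> \<and> wbelow d \<delta> c x)"

definition fams :: "('a::complete_lattice \<Rightarrow> ennreal) \<Rightarrow> 'a \<Rightarrow> 'a set set" where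
  "fams d x = {M. (\<forall>c\<in>M. whit d x c \<and> c \<noteq> bot) \<and> (\<forall>c\<in>M. \<forall>c'\<in>M. c \<noteq> c' \<longrightarrow> inf c c' = bot)}"

lemma max_fam: "\<exists>M\<in>fams d x. \<forall>X\<in>fams d x. M \<subseteq> X \<longrightarrow> X = M"
proof (rule Zorn_Lemma, intro ballI)
  fix C assume C: "C \<in> chains (fams d x)"
  then have sub: "C \<subseteq> fams d x" and ch: "\<forall>A\<in>C. \<forall>B\<in>C. A \<subseteq> B \<or> B \<subseteq> A"
    unfolding chains_def chain_subset_def by auto
  show "\<Union>C \<in> fams d x" unfolding fams_def
  proof (rule CollectI, rule conjI)
    show "\<forall>c\<in>\<Union>C. whit d x c \<and> c \<noteq> bot" using sub unfolding fams_def by blast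
  next
    show "\<forall>c\<in>\<Union>C. \<forall>c'\<in>\<Union>C. c \<noteq> c' \<longrightarrow> inf c c' = bot"
    proof (intro ballI impI)
    fix c c' assume "c \<in> \<Union>C" "c' \<in> \<Union>C" "c \<noteq> c'"
    then obtain A B where "A \<in> C" "B \<in> C" "c \<in> A" "c' \<in> B" by blast
    with ch have "\<exists>E\<in>C. c \<in> E \<and> c' \<in> E" by blast
    then show "inf c c' = bot" using sub \<open>c \<noteq> c'\<close> unfolding fams_def by blast
    qed
  qed
qed

lemma fam_dense:
  fixes d :: "'a::complete_lattice \<Rightarrow> ennreal"
  assumes F: "frame TYPE('a)" and D: "diameter d" and Ad: "admissible d"
    and M: "M \<in> fams d x" and mx: "\<forall>X\<in>fams d x. M \<subseteq> X \<longrightarrow> X = M"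
  shows "inf x (pcompl (Sup M)) = bot"
proof -
  let ?A = "Sup M"
  let ?B = "{b. \<exists>\<epsilon>::real. \<epsilon> > 0 \<and> wbelow d \<epsilon> b x}"
  have "inf x (pcompl ?A) = inf (pcompl ?A) (Sup ?B)" using adm[OF Ad, of x] by (metis inf_commute)
  also have "\<dots> = Sup ((\<lambda>b. inf (pcompl ?A) b) ` ?B)" using fdist[OF F] by blast
  also have "\<dots> = bot"
  proof (rule SUP_bot_conv(1)[THEN iffD2], rule ballI)
    fix b assume "b \<in> ?B"
    then obtain \<epsilon>::real where \<epsilon>: "\<epsilon> > 0" "wbelow d \<epsilon> b x" by blast
    have "inf (pcompl ?A) b = Sup ((\<lambda>c. inf (inf (pcompl ?A) b) c) ` {c. d c < ennreal \<epsilon>})"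
      using split_small[OF F D \<epsilon>(1)] by blast
    also have "\<dots> = bot"
    proof (rule SUP_bot_conv(1)[THEN iffD2], rule ballI, rule ccontr)
      fix e assume e: "e \<in> {c. d c < ennreal \<epsilon>}"
      let ?w = "inf (inf (pcompl ?A) b) e"
      assume wb: "?w \<noteq> bot"
      have "d ?w \<le> d e" using Dmono[OF D] by simp
      then have "d ?w < ennreal \<epsilon>" using e by simp
      moreover have "wbelow d \<epsilon> ?w x" using wbelow_anti[OF \<epsilon>(2)] by (simp add: le_infI1)
      ultimately have wh: "whit d x ?w" unfolding whit_def using \<epsilon>(1) by blast
      have wA: "?w \<le> pcompl ?A" by (simp add: le_infI1)
      have disj: "inf ?w c = bot" if "c \<in> M" for c
      proof -
        have "inf ?w c \<le> inf (pcompl ?A) ?A" using wA that by (meson Sup_upper inf_mono)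
        also have "\<dots> = bot" using pc_inf[OF F, of ?A] by (simp add: inf_commute)
        finally show ?thesis by (simp add: bot_unique)
      qed
      have "insert ?w M \<in> fams d x" using M wh wb disj unfolding fams_def
        by (auto simp: inf_commute)
      then have "insert ?w M = M" using mx by blast
      then have "?w \<in> M" by blast
      then have "?w \<le> ?A" by (rule Sup_upper)
      then have "?w \<le> inf ?A (pcompl ?A)" using wA by simp
      then show False using wb pc_inf[OF F, of ?A] by (simp add: bot_unique)
    qed
    finally show "inf (pcompl ?A) b = bot" .
  qed
  finally show ?thesis .
qed


lemma key:
  fixes d :: "'a::complete_lattice \<Rightarrow> ennreal"
  assumes F: "frame TYPE('a)" and D: "diameter d" and Ad: "admissible d"
    and M: "M \<in> fams d x" and dense: "inf x (pcompl (Sup M)) = bot"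
    and s: "\<forall>c\<in>M. s c \<noteq> bot \<and> s c \<le> c"
  shows "inf (pcompl (pcompl x)) (pcompl (Sup (s ` M))) \<le> x"
proof -
  let ?u = "pcompl (pcompl x)"
  let ?Z = "Sup (s ` M)"
  let ?A = "Sup M"
  define y where "y = inf ?u (pcompl ?Z)"
  have uA: "inf ?u (pcompl ?A) = bot"
  proof -
    have "x \<le> pcompl (pcompl ?A)" using dense pc_iff[OF F] by blast
    then have "?u \<le> pcompl (pcompl (pcompl (pcompl ?A)))" using pc_anti[OF F] by blast
    then have "?u \<le> pcompl (pcompl ?A)" using pc3[OF F] by simp
    then have "inf ?u (pcompl ?A) \<le> inf (pcompl (pcompl ?A)) (pcompl ?A)" by (simp add: le_infI1)
    also have "\<dots> = bot" using pc_inf[OF F, of "pcompl ?A"] by (simp add: inf_commute)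
    finally show ?thesis by (simp add: bot_unique)
  qed
  have "Sup {b. \<exists>\<epsilon>::real. \<epsilon> > 0 \<and> wbelow d \<epsilon> b y} \<le> x"
  proof (rule Sup_least)
    fix b assume "b \<in> {b. \<exists>\<epsilon>::real. \<epsilon> > 0 \<and> wbelow d \<epsilon> b y}"
    then obtain \<epsilon>::real where \<epsilon>: "\<epsilon> > 0" "wbelow d \<epsilon> b y" by blast
    have by': "b \<le> y" using wbelow_le[OF F D \<epsilon>] .
    have "Sup ((\<lambda>c. inf b c) ` {c. d c < ennreal \<epsilon>}) \<le> x"
    proof (rule SUP_least)
      fix e assume e: "e \<in> {c. d c < ennreal \<epsilon>}"
      let ?b = "inf b e"
      show "?b \<le> x"
      proof (cases "?b = bot")
        case nb: False
        have "?b \<le> b" by simp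
        also have "b \<le> y" by (fact by')
        also have "y \<le> ?u" unfolding y_def by simp
        finally have bu: "?b \<le> ?u" .
        have "inf ?b ?A \<noteq> bot"
        proof
          assume "inf ?b ?A = bot"
          then have "?b \<le> pcompl ?A" using pc_iff[OF F] by blast
          then have "?b \<le> inf ?u (pcompl ?A)" using bu by simp
          then show False using uA nb by (simp add: bot_unique)
        qed
        then have "Sup ((\<lambda>c. inf ?b c) ` M) \<noteq> bot" using fdist[OF F, of ?b M] by simp
        then obtain c where c: "c \<in> M" "inf ?b c \<noteq> bot" by auto
        then have "whit d x c" using M unfolding fams_def by blast
        then obtain \<delta>::real where \<delta>: "\<delta> > 0" "d c < ennreal \<delta>" "wbelow d \<delta> c x"
          unfolding whit_def by blast
        show ?thesis
        proof (cases "d c < ennreal \<epsilon>")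
          case True
          have ineq: "inf ?b c \<le> inf c b" by (simp add: le_infI1 inf.coboundedI2)
          have "inf c b \<noteq> bot"
          proof
            assume "inf c b = bot"
            with ineq have "inf ?b c \<le> bot" by simp
            then show False using c(2) by (simp add: bot_unique)
          qed
          then have "c \<le> y" using \<epsilon>(2) True unfolding wbelow_def by blast
          then have "c \<le> pcompl ?Z" unfolding y_def by simp
          moreover have "s c \<le> c" "s c \<le> ?Z" using s c(1) by (auto intro: Sup_upper)
          ultimately have "s c \<le> inf ?Z (pcompl ?Z)" by auto
          then have "s c = bot" using pc_inf[OF F, of ?Z] by (simp add: bot_unique)
          then show ?thesis using s c(1) by blast
        next
          case False
          have "d ?b \<le> d e" using Dmono[OF D] by simp
          also have "\<dots> < ennreal \<epsilon>" using e by simp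
          also have "\<dots> \<le> d c" using False by simp
          also have "\<dots> < ennreal \<delta>" by (rule \<delta>(2))
          finally have "d ?b < ennreal \<delta>" .
          then show ?thesis using \<delta>(3) c(2) unfolding wbelow_def by blast
        qed
      qed simp
    qed
    then show "b \<le> x" using split_small[OF F D \<epsilon>(1), of b] by simp
  qed
  then show ?thesis using adm[OF Ad, of y] unfolding y_def by simp
qed

theorem corollary5p6:
  fixes d :: "'a::complete_lattice \<Rightarrow> ennreal"
  assumes "metric_locale d"
    and "\<forall>p::'a. \<not> isolated_point p"
  shows "(booleanization :: 'a set) = demorganization"
proof -
  have F: "frame TYPE('a)" and D: "diameter d" and Ad: "admissible d"
    using assms(1) unfolding metric_locale_def by auto
  show ?thesis
  proof
    show "(booleanization :: 'a set) \<subseteq> demorganization"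
    proof
      fix x :: 'a assume "x \<in> booleanization"
      then have xb: "x = pcompl (pcompl x)" unfolding booleanization_def by blast
      show "x \<in> demorganization" unfolding demorganization_def
      proof (rule InterI, clarify)
        fix a :: 'a
        let ?c = "sup (pcompl a) (pcompl (pcompl a))"
        have pc: "pcompl ?c = bot"
        proof -
          have "inf (pcompl ?c) (pcompl a) \<le> inf (pcompl ?c) ?c" "inf (pcompl ?c) (pcompl (pcompl a)) \<le> inf (pcompl ?c) ?c"
            by (rule inf_mono; simp)+
          then have "inf (pcompl ?c) (pcompl a) = bot" "inf (pcompl ?c) (pcompl (pcompl a)) = bot"
            using pc_inf[OF F, of ?c] by (simp_all add: inf_commute bot_unique)
          then have "pcompl ?c \<le> pcompl (pcompl a)" "pcompl ?c \<le> pcompl (pcompl (pcompl a))"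
            using pc_iff[OF F] by blast+
          then have "pcompl ?c \<le> inf (pcompl (pcompl a)) (pcompl (pcompl (pcompl a)))" by simp
          then show ?thesis using pc_inf[OF F, of "pcompl (pcompl a)"] by (simp add: bot_unique)
        qed
        have "himp ?c x = x"
        proof (rule order.antisym)
          let ?y = "himp ?c x"
          have "inf ?y ?c \<le> x" using himp_iff[OF F] by blast
          have "inf (inf ?y (pcompl x)) ?c = inf (inf ?y ?c) (pcompl x)" by (simp add: ac_simps)
          also have "\<dots> \<le> inf x (pcompl x)" by (rule inf_mono) (fact, simp)
          finally have "inf (inf ?y (pcompl x)) ?c \<le> inf x (pcompl x)" .
          then have "inf (inf ?y (pcompl x)) ?c = bot" using pc_inf[OF F, of x] by (simp add: bot_unique)
          then have "inf ?y (pcompl x) \<le> pcompl ?c" using pc_iff[OF F] by blast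
          then have "inf ?y (pcompl x) = bot" using pc by (simp add: bot_unique)
          then have "?y \<le> pcompl (pcompl x)" using pc_iff[OF F] by blast
          then show "?y \<le> x" using xb by simp
        next
          show "x \<le> himp ?c x" using himp_iff[OF F] by simp
        qed
        then show "x \<in> open_sublocale ?c" unfolding open_sublocale_def by (metis (mono_tags, lifting) mem_Collect_eq)
      qed
    qed
  next
    show "(demorganization :: 'a set) \<subseteq> booleanization"
    proof
      fix x :: 'a assume xm: "x \<in> demorganization"
      obtain M where M: "M \<in> fams d x" and mx: "\<forall>X\<in>fams d x. M \<subseteq> X \<longrightarrow> X = M"
        using max_fam by blast
      have pw: "\<forall>c\<in>M. \<forall>c'\<in>M. c \<noteq> c' \<longrightarrow> inf c c' = bot"
        using M unfolding fams_def by simp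
      have dense: "inf x (pcompl (Sup M)) = bot" using fam_dense[OF F D Ad M mx] .
      have "\<forall>c\<in>M. \<exists>f. f \<noteq> bot \<and> f \<le> c \<and> inf c (pcompl f) \<noteq> bot"
      proof
        fix c assume "c \<in> M"
        then have "c \<noteq> bot" using M unfolding fams_def by blast
        then show "\<exists>f. f \<noteq> bot \<and> f \<le> c \<and> inf c (pcompl f) \<noteq> bot"
          using split_elem[OF F D Ad assms(2)] by blast
      qed
      from bchoice[OF this] obtain fs where fs: "\<forall>c\<in>M. fs c \<noteq> bot \<and> fs c \<le> c \<and> inf c (pcompl (fs c)) \<noteq> bot"
        by blast
      let ?s2 = "\<lambda>c. inf c (pcompl (fs c))"
      let ?V = "Sup (fs ` M)"
      let ?W = "Sup (?s2 ` M)"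
      let ?u = "pcompl (pcompl x)"
      have fs1: "\<forall>c\<in>M. fs c \<noteq> bot \<and> fs c \<le> c" using fs by blast
      have k1: "inf ?u (pcompl ?V) \<le> x" using key[OF F D Ad M dense fs1] .
      have fs2: "\<forall>c\<in>M. ?s2 c \<noteq> bot \<and> ?s2 c \<le> c" using fs inf_le1 by blast
      have k2: "inf ?u (pcompl ?W) \<le> x" using key[OF F D Ad M dense fs2] .
      have WV: "?W \<le> pcompl ?V"
      proof (rule SUP_least)
        fix c2 assume c2: "c2 \<in> M"
        let ?w = "?s2 c2"
        have "inf ?w ?V = Sup ((\<lambda>v. inf ?w v) ` (fs ` M))" using fdist[OF F] by blast
        also have "\<dots> = bot"
        proof (rule SUP_bot_conv(1)[THEN iffD2], rule ballI)
          fix v assume "v \<in> fs ` M"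
          then obtain c1 where c1: "c1 \<in> M" "v = fs c1" by blast
          show "inf ?w v = bot"
          proof (cases "c1 = c2")
            case True
            have "inf ?w v \<le> inf (pcompl (fs c1)) (fs c1)"
              unfolding c1(2) True by (rule inf_mono) simp_all
            also have "\<dots> = bot" using pc_inf[OF F, of "fs c1"] by (simp add: inf_commute)
            finally show ?thesis by (simp add: bot_unique)
          next
            case False
            have "fs c1 \<le> c1" using fs c1(1) by blast
            then have vc: "v \<le> c1" unfolding c1(2) .
            have wc: "?w \<le> c2" by (rule inf_le1)
            have "inf ?w v \<le> inf c2 c1" using inf_mono[OF wc vc] .
            also have "\<dots> = bot"
            proof -
              have "c2 \<noteq> c1" using False by simp
              then show ?thesis using pw c1(1) c2 by blast
            qed
            finally show ?thesis by (simp add: bot_unique)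
          qed
        qed
        finally show "?w \<le> pcompl ?V" using pc_iff[OF F] by blast
      qed
      then have "pcompl (pcompl ?V) \<le> pcompl ?W" using pc_anti[OF F] by blast
      then have k3: "inf ?u (pcompl (pcompl ?V)) \<le> x" using k2 by (meson inf_mono order_refl order_trans)
      let ?c = "sup (pcompl ?V) (pcompl (pcompl ?V))"
      have "inf ?u ?c = sup (inf ?u (pcompl ?V)) (inf ?u (pcompl (pcompl ?V)))" using fdist2[OF F] by blast
      also have "\<dots> \<le> x" using k1 k3 by simp
      finally have uc: "inf ?u ?c \<le> x" .
      have "x \<in> open_sublocale ?c" using xm unfolding demorganization_def by blast
      then obtain b where "x = himp ?c b" unfolding open_sublocale_def by blast
      then have "himp ?c x = x" using himp_himp[OF F] by simp
      then have "?u \<le> x" using uc himp_iff[OF F, of ?u ?c x] by simp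
      then have "x = ?u" using le_pcc[OF F, of x] by simp
      then show "x \<in> booleanization" unfolding booleanization_def by blast
    qed
  qed
qed

end
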